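(* Let $\{S(t)\}_{t\ge0}$ be a dissipative semigroup on a complete metric space $(X,d)$ and let $\mathcal{B}_0$ be a positively invariant bounded absorbing set. Assume there exist a constant $T>0$, a constant $\eta\in[0,1)$, a function $g:(\mathbb{R}^+)^m\to\mathbb{R}^+$, a function $\phi:X\times X\to\mathbb{R}^+$ and pseudometrics $\varrho_1,\dots,\varrho_m$ on $\mathcal{B}_0$ such that: (i) $g$ is non-decreasing in each variable, $g(0,\dots,0)=0$, and $g$ is continuous at $(0,\dots,0)$; (ii) for every sequence $\{y_n\}\subseteq\mathcal{B}_0$ there is a subsequence $\{y_{n_k}\}$ with $\lim_{k\to\infty}\lim_{l\to\infty}\phi(y_{n_k},y_{n_l})=0$; (iii) each $\varrho_i$ is precompact on $\mathcal{B}_0$, i.e. every sequence in $\mathcal{B}_0$ has a subsequence which is Cauchy with respect to $\varrho_i$; (iv) for all $y_1,y_2\in\mathcal{B}_0$, $$d(S(T)y_1,S(T)y_2)\le\eta\, d(y_1,y_2)+g\big(\varrho_1(y_1,y_2),\dots,\varrho_m(y_1,y_2)\big)+\phi(y_1,y_2).$$ Then $(X,\{S(t)\}_{t\ge0})$ is exponentially decaying with respect to the noncompactness measure, and for every bounded $B\subseteq X$, $$\alpha(S(t)B)\le2\eta^{\frac{t-t_*(B)-T}{T}}\alpha(\mathcal{B}_0)\quad\forall t\ge t_*(B)+T,$$ where $t_*(B)$ satisfies $S(t)B\subseteq\mathcal{B}_0$ for all $t\ge t_*(B)$.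
   Context: A semigroup consists of continuous maps $S(t):X\to X$ with $S(0)=I$, $S(t+s)=S(t)S(s)$; it is dissipative if it has a bounded absorbing set (a closed set $\mathcal{B}$ such that every bounded $B$ satisfies $S(t)B\subseteq\mathcal{B}$ for all large $t$); positively invariant means $S(t)\mathcal{B}_0\subseteq\mathcal{B}_0$ for $t\ge0$. $\alpha$ is the Kuratowski measure of noncompactness, $\alpha(B)=\inf\{\delta>0:B\text{ has a finite cover by sets of diameter}<\delta\}$. The system is exponentially decaying with respect to the noncompactness measure if it is dissipative and there are $t_0>0$ and constants $C,\beta>0$ with $\alpha(S(t)\mathcal{B}_0)\le Ce^{-\beta t}$ for all $t\ge t_0$, for a positively invariant bounded absorbing set $\mathcal{B}_0$. *)

theory Defs
  imports "HOL-Analysis.Analysis"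
begin

definition semigroup :: "(real \<Rightarrow> 'a::metric_space \<Rightarrow> 'a) \<Rightarrow> bool" where
  "semigroup S \<longleftrightarrow>
     (\<forall>t\<ge>0. continuous_on UNIV (S t)) \<and>
     S 0 = id \<and>
     (\<forall>t\<ge>0. \<forall>s\<ge>0. S (t + s) = S t \<circ> S s)"

definition absorbing :: "(real \<Rightarrow> 'a::metric_space \<Rightarrow> 'a) \<Rightarrow> 'a set \<Rightarrow> bool" where
  "absorbing S A \<longleftrightarrow> closed A \<and>
     (\<forall>B. bounded B \<longrightarrow> (\<exists>t0\<ge>0. \<forall>t\<ge>t0. S t ` B \<subseteq> A))"

definition dissipative :: "(real \<Rightarrow> 'a::metric_space \<Rightarrow> 'a) \<Rightarrow> bool" where
  "dissipative S \<longleftrightarrow> semigroup S \<and> (\<exists>A. bounded A \<and> absorbing S A)"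

definition positively_invariant :: "(real \<Rightarrow> 'a \<Rightarrow> 'a) \<Rightarrow> 'a set \<Rightarrow> bool" where
  "positively_invariant S A \<longleftrightarrow> (\<forall>t\<ge>0. S t ` A \<subseteq> A)"

text \<open>Kuratowski measure of noncompactness (meaningful for bounded sets).\<close>
definition kuratowski_alpha :: "'a::metric_space set \<Rightarrow> real" where
  "kuratowski_alpha B = Inf {\<delta>. \<delta> > 0 \<and>
     (\<exists>F. finite F \<and> B \<subseteq> \<Union>F \<and> (\<forall>U\<in>F. bounded U \<and> diameter U < \<delta>))}"

definition exponentially_decaying :: "(real \<Rightarrow> 'a::metric_space \<Rightarrow> 'a) \<Rightarrow> bool" where
  "exponentially_decaying S \<longleftrightarrow> dissipative S \<and>
     (\<exists>B0. positively_invariant S B0 \<and> bounded B0 \<and> absorbing S B0 \<and>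
        (\<exists>t0 C \<beta>. t0 > 0 \<and> C > 0 \<and> \<beta> > 0 \<and>
           (\<forall>t\<ge>t0. kuratowski_alpha (S t ` B0) \<le> C * exp (- \<beta> * t))))"

definition pseudometric_on :: "'a set \<Rightarrow> ('a \<Rightarrow> 'a \<Rightarrow> real) \<Rightarrow> bool" where
  "pseudometric_on A \<rho> \<longleftrightarrow>
     (\<forall>x\<in>A. \<rho> x x = 0) \<and>
     (\<forall>x\<in>A. \<forall>y\<in>A. 0 \<le> \<rho> x y \<and> \<rho> x y = \<rho> y x) \<and>
     (\<forall>x\<in>A. \<forall>y\<in>A. \<forall>z\<in>A. \<rho> x z \<le> \<rho> x y + \<rho> y z)"

definition precompact_pseudometric_on :: "'a set \<Rightarrow> ('a \<Rightarrow> 'a \<Rightarrow> real) \<Rightarrow> bool" where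
  "precompact_pseudometric_on A \<rho> \<longleftrightarrow>
     (\<forall>y. (\<forall>n. y n \<in> A) \<longrightarrow>
        (\<exists>r::nat \<Rightarrow> nat. strict_mono r \<and>
           (\<forall>\<epsilon>>0. \<exists>N. \<forall>p\<ge>N. \<forall>q\<ge>N. \<rho> (y (r p)) (y (r q)) < \<epsilon>)))"

end

theory Submission
  imports Defs
begin

lemma alpha_le:
  fixes X :: "'a::metric_space set" and c :: real
  assumes c: "c \<ge> 0"
    and cov: "\<And>e. e > 0 \<Longrightarrow> \<exists>F. finite F \<and> X \<subseteq> \<Union>F \<and> (\<forall>U\<in>F. bounded U \<and> diameter U < c + e)"
  shows "kuratowski_alpha X \<le> c"
proof (rule field_le_epsilon)
  fix e :: real assume e: "0 < e"
  let ?D = "{\<delta>. \<delta> > 0 \<and> (\<exists>F. finite F \<and> X \<subseteq> \<Union>F \<and> (\<forall>U\<in>F. bounded U \<and> diameter U < \<delta>))}"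
  have "c + e \<in> ?D" using cov[OF e] c e by auto
  moreover have "bdd_below ?D" by (rule bdd_belowI[of _ 0]) auto
  ultimately have "Inf ?D \<le> c + e" by (rule cInf_lower)
  then show "kuratowski_alpha X \<le> c + e" unfolding kuratowski_alpha_def .
qed

lemma alpha_D_nonempty:
  fixes X :: "'a::metric_space set"
  assumes "bounded X"
  shows "{\<delta>. \<delta> > 0 \<and> (\<exists>F. finite F \<and> X \<subseteq> \<Union>F \<and> (\<forall>U\<in>F. bounded U \<and> diameter U < \<delta>))} \<noteq> {}"
proof -
  have "diameter X + 1 > 0" using diameter_ge_0[OF assms] by linarith
  moreover have "finite {X} \<and> X \<subseteq> \<Union>{X} \<and> (\<forall>U\<in>{X}. bounded U \<and> diameter U < diameter X + 1)"
    using assms by auto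
  ultimately show ?thesis by blast
qed

lemma alpha_cover:
  fixes X :: "'a::metric_space set"
  assumes "bounded X" "kuratowski_alpha X < d"
  shows "\<exists>F. finite F \<and> X \<subseteq> \<Union>F \<and> (\<forall>U\<in>F. bounded U \<and> diameter U < d)"
proof -
  have "\<exists>x\<in>{\<delta>. \<delta> > 0 \<and> (\<exists>F. finite F \<and> X \<subseteq> \<Union>F \<and> (\<forall>U\<in>F. bounded U \<and> diameter U < \<delta>))}. x < d"
    using cInf_lessD[OF alpha_D_nonempty[OF assms(1)], of d] assms(2)
    unfolding kuratowski_alpha_def by blast
  then obtain \<delta> F where "\<delta> < d" "finite F" "X \<subseteq> \<Union>F" "\<forall>U\<in>F. bounded U \<and> diameter U < \<delta>"
    by blast
  then show ?thesis by (meson order.strict_trans)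
qed

lemma alpha_nonneg:
  fixes X :: "'a::metric_space set"
  assumes "bounded X"
  shows "0 \<le> kuratowski_alpha X"
  unfolding kuratowski_alpha_def
  by (rule cInf_greatest[OF alpha_D_nonempty[OF assms]]) auto

lemma cover_of_sep:
  fixes X :: "'a::metric_space set" and r :: real
  assumes sep: "\<And>x::nat \<Rightarrow> 'a. (\<forall>n. x n \<in> X) \<Longrightarrow> \<exists>k l. k < l \<and> dist (x k) (x l) \<le> r"
  shows "\<exists>P. finite P \<and> P \<subseteq> X \<and> X \<subseteq> (\<Union>p\<in>P. cball p r)"
proof (rule ccontr)
  assume na: "\<not> ?thesis"
  have ex: "\<exists>x. x \<in> X \<and> (\<forall>p\<in>P. r < dist p x)" if "finite P" "P \<subseteq> X" for P
  proof -
    from na that have "\<not> X \<subseteq> (\<Union>p\<in>P. cball p r)" by blast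
    then obtain x where "x \<in> X" "\<forall>p\<in>P. x \<notin> cball p r" by blast
    then have "x \<in> X \<and> (\<forall>p\<in>P. r < dist p x)" by (simp add: not_le)
    then show ?thesis by blast
  qed
  define f where "f P = (SOME x. x \<in> X \<and> (\<forall>p\<in>P. r < dist p x))" for P
  have f: "f P \<in> X \<and> (\<forall>p\<in>P. r < dist p (f P))" if "finite P" "P \<subseteq> X" for P
    unfolding f_def by (rule someI_ex[OF ex[OF that]])
  define Q where "Q n = rec_nat {} (\<lambda>_ P. insert (f P) P) n" for n
  have Q0: "Q 0 = {}" and QS: "Q (Suc n) = insert (f (Q n)) (Q n)" for n by (simp_all add: Q_def)
  have Qfin: "finite (Q n) \<and> Q n \<subseteq> X" for n
  proof (induction n)
    case 0 then show ?case by (simp add: Q0)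
  next
    case (Suc n)
    then have "f (Q n) \<in> X" using f by blast
    with Suc show ?case by (simp add: QS)
  qed
  define x where "x n = f (Q n)" for n
  have xX: "\<forall>n. x n \<in> X" using f Qfin unfolding x_def by blast
  have Qx: "Q n = x ` {..<n}" for n
  proof (induction n)
    case 0 then show ?case by (simp add: Q0)
  next
    case (Suc n)
    have "Q (Suc n) = insert (x n) (Q n)" by (simp add: QS x_def)
    also have "\<dots> = x ` {..<Suc n}" using Suc by (simp add: lessThan_Suc)
    finally show ?case .
  qed
  have "r < dist (x k) (x l)" if "k < l" for k l
  proof -
    have "x k \<in> Q l" using that Qx by auto
    moreover have "\<forall>p\<in>Q l. r < dist p (f (Q l))" using f Qfin by blast
    ultimately show ?thesis unfolding x_def by blast
  qed
  moreover obtain k l where "k < l" "dist (x k) (x l) \<le> r" using sep[OF xX] by blast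
  ultimately show False by fastforce
qed
definition good :: "'a set \<Rightarrow> ((nat \<Rightarrow> 'a) \<Rightarrow> bool) \<Rightarrow> bool" where
  "good B P \<longleftrightarrow> (\<forall>y. (\<forall>n. y n \<in> B) \<longrightarrow> (\<exists>r::nat\<Rightarrow>nat. strict_mono r \<and> P (y \<circ> r))) \<and>
     (\<forall>y (r::nat\<Rightarrow>nat). P y \<and> strict_mono r \<longrightarrow> P (y \<circ> r))"

lemma good_conj:
  assumes "good B P" "good B Q"
  shows "good B (\<lambda>y. P y \<and> Q y)"
proof -
  have A: "\<exists>r::nat\<Rightarrow>nat. strict_mono r \<and> P (y \<circ> r) \<and> Q (y \<circ> r)" if y: "\<forall>n. y n \<in> B" for y
  proof -
    from assms(1) y obtain r1 :: "nat \<Rightarrow> nat" where r1: "strict_mono r1" "P (y \<circ> r1)" unfolding good_def by blast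
    from y have "\<forall>n. (y \<circ> r1) n \<in> B" by simp
    with assms(2) obtain r2 :: "nat \<Rightarrow> nat" where r2: "strict_mono r2" "Q (y \<circ> r1 \<circ> r2)" unfolding good_def by blast
    have "P (y \<circ> r1 \<circ> r2)" using assms(1) r1 r2 unfolding good_def by blast
    then show ?thesis
      using r1 r2 strict_mono_o[OF r1(1) r2(1)] by (metis comp_assoc)
  qed
  have B: "P (y \<circ> r) \<and> Q (y \<circ> r)" if "P y" "Q y" "strict_mono r" for y and r :: "nat \<Rightarrow> nat"
    using assms that unfolding good_def by blast
  show ?thesis unfolding good_def using A B by blast
qed

lemma good_true: "good B (\<lambda>y. True)"
  unfolding good_def using strict_mono_id by blast

lemma good_ball:
  assumes "finite A" "\<forall>a\<in>A. good B (P a)"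
  shows "good B (\<lambda>y. \<forall>a\<in>A. P a y)"
  using assms
proof (induction A rule: finite_induct)
  case empty then show ?case using good_true by simp
next
  case (insert a A)
  have "good B (\<lambda>y. P a y \<and> (\<forall>a\<in>A. P a y))"
    using insert by (intro good_conj) auto
  then show ?case by simp
qed

lemma good_map:
  assumes "\<forall>x\<in>B. f x \<in> C" "good C P"
  shows "good B (\<lambda>y. P (f \<circ> y))"
proof -
  have A: "\<exists>r::nat\<Rightarrow>nat. strict_mono r \<and> P (f \<circ> (y \<circ> r))" if "\<forall>n. y n \<in> B" for y
  proof -
    have "\<forall>n. (f \<circ> y) n \<in> C" using assms(1) that by simp
    then obtain r :: "nat \<Rightarrow> nat" where "strict_mono r" "P (f \<circ> y \<circ> r)" using assms(2) unfolding good_def by blast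
    then show ?thesis by (metis comp_assoc)
  qed
  have B: "P (f \<circ> (y \<circ> r))" if "P (f \<circ> y)" "strict_mono r" for y and r :: "nat \<Rightarrow> nat"
  proof -
    have "P (f \<circ> y \<circ> r)" using assms(2) that unfolding good_def by blast
    then show ?thesis by (metis comp_assoc)
  qed
  show ?thesis unfolding good_def using A B by blast
qed
lemma diameter_cball_le:
  fixes p :: "'a::metric_space"
  assumes "0 \<le> r"
  shows "diameter (cball p r) \<le> 2 * r"
proof (cases "cball p r = {}")
  case True then show ?thesis using assms by (simp add: diameter_def)
next
  case False
  have "(SUP (x,y)\<in>cball p r \<times> cball p r. dist x y) \<le> 2 * r"
  proof (rule cSUP_least)
    show "cball p r \<times> cball p r \<noteq> {}" using False by simp
    fix xy assume "xy \<in> cball p r \<times> cball p r"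
    then obtain x y where xy: "xy = (x, y)" "dist p x \<le> r" "dist p y \<le> r" by auto
    have "dist x y \<le> dist x p + dist p y" by (rule dist_triangle)
    also have "\<dots> \<le> 2 * r" using xy by (simp add: dist_commute)
    finally show "(case xy of (x, y) \<Rightarrow> dist x y) \<le> 2 * r" using xy by simp
  qed
  then show ?thesis using False by (simp add: diameter_def)
qed
theorem theorem4p7:
  fixes S :: "real \<Rightarrow> 'a::complete_space \<Rightarrow> 'a"
    and B0 :: "'a set"
    and T \<eta> :: real
    and g :: "real^'m \<Rightarrow> real"
    and \<phi> :: "'a \<Rightarrow> 'a \<Rightarrow> real"
    and \<rho> :: "'m \<Rightarrow> 'a \<Rightarrow> 'a \<Rightarrow> real"
  assumes diss: "dissipative S"
    and inv: "positively_invariant S B0"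
    and bdd: "bounded B0"
    and abs: "absorbing S B0"
    and T_pos: "T > 0"
    and eta: "0 \<le> \<eta>" "\<eta> < 1"
    and g_nonneg: "\<forall>x. (\<forall>i. 0 \<le> x $ i) \<longrightarrow> 0 \<le> g x"
    and g_mono: "\<forall>x y. (\<forall>i. 0 \<le> x $ i \<and> x $ i \<le> y $ i) \<longrightarrow> g x \<le> g y"
    and g_zero: "g 0 = 0"
    and g_cont: "continuous (at 0 within {x. \<forall>i. 0 \<le> x $ i}) g"
    and phi_nonneg: "\<forall>x y. 0 \<le> \<phi> x y"
    and phi_seq: "\<forall>y. (\<forall>n. y n \<in> B0) \<longrightarrow>
        (\<exists>r::nat \<Rightarrow> nat. strict_mono r \<and>
          (\<exists>L. (\<forall>k. (\<lambda>l. \<phi> (y (r k)) (y (r l))) \<longlonglongrightarrow> L k) \<and> L \<longlonglongrightarrow> 0))"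
    and rho_pm: "\<forall>i. pseudometric_on B0 (\<rho> i)"
    and rho_pc: "\<forall>i. precompact_pseudometric_on B0 (\<rho> i)"
    and contr: "\<forall>y1\<in>B0. \<forall>y2\<in>B0.
        dist (S T y1) (S T y2) \<le> \<eta> * dist y1 y2 + g (\<chi> i. \<rho> i y1 y2) + \<phi> y1 y2"
  shows "exponentially_decaying S \<and>
    (\<forall>B ts. bounded B \<and> 0 \<le> ts \<and> (\<forall>t\<ge>ts. S t ` B \<subseteq> B0) \<longrightarrow>
       (\<forall>t\<ge>ts + T. kuratowski_alpha (S t ` B)
           \<le> 2 * \<eta> powr ((t - ts - T) / T) * kuratowski_alpha B0))"
proof -
  have sg: "semigroup S" using diss unfolding dissipative_def by blast
  have S_add: "S (a + b) x = S a (S b x)" if "a \<ge> 0" "b \<ge> 0" for a b x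
    using sg that unfolding semigroup_def by auto
  define Sn where "Sn j = S (real j * T)" for j :: nat
  have Sn_suc: "Sn (Suc j) x = S T (Sn j x)" for j x
  proof -
    have "real (Suc j) * T = T + real j * T" by (simp add: algebra_simps)
    then show ?thesis unfolding Sn_def using S_add[of T "real j * T" x] T_pos by simp
  qed
  have Sn0: "Sn 0 x = x" for x using sg unfolding Sn_def semigroup_def by simp
  have Sn_B0: "Sn j x \<in> B0" if "x \<in> B0" for j x
  proof -
    have "real j * T \<ge> 0" using T_pos by simp
    then show ?thesis using inv that unfolding Sn_def positively_invariant_def by blast
  qed
  have rho_nn: "0 \<le> \<rho> i x y" if "x \<in> B0" "y \<in> B0" for i x y
    using rho_pm that unfolding pseudometric_on_def by blast
  define h where "h j y1 y2 = g (\<chi> i. \<rho> i (Sn j y1) (Sn j y2)) + \<phi> (Sn j y1) (Sn j y2)" for j y1 y2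
  have h_nn: "0 \<le> h j y1 y2" if "y1 \<in> B0" "y2 \<in> B0" for j y1 y2
  proof -
    have "0 \<le> g (\<chi> i. \<rho> i (Sn j y1) (Sn j y2))"
      using g_nonneg rho_nn Sn_B0 that by simp
    then show ?thesis unfolding h_def using phi_nonneg by (simp add: add_nonneg_nonneg)
  qed
  have iter: "dist (Sn n y1) (Sn n y2) \<le> \<eta>^n * dist y1 y2 + (\<Sum>j<n. h j y1 y2)"
    if "y1 \<in> B0" "y2 \<in> B0" for n y1 y2
  proof (induction n)
    case 0 then show ?case by (simp add: Sn0)
  next
    case (Suc n)
    have "dist (Sn (Suc n) y1) (Sn (Suc n) y2) \<le> \<eta> * dist (Sn n y1) (Sn n y2) + h n y1 y2"
      using contr Sn_B0 that unfolding Sn_suc h_def by (simp add: add.assoc)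
    also have "\<dots> \<le> \<eta> * (\<eta>^n * dist y1 y2 + (\<Sum>j<n. h j y1 y2)) + h n y1 y2"
      using Suc eta by (simp add: mult_left_mono)
    also have "\<dots> \<le> \<eta>^Suc n * dist y1 y2 + (\<Sum>j<Suc n. h j y1 y2)"
    proof -
      have "0 \<le> (\<Sum>j<n. h j y1 y2)" using h_nn that by (simp add: sum_nonneg)
      then have "\<eta> * (\<Sum>j<n. h j y1 y2) \<le> (\<Sum>j<n. h j y1 y2)" using eta
        by (simp add: mult_left_le_one_le)
      then show ?thesis by (simp add: algebra_simps)
    qed
    finally show ?case .
  qed
  define Cau where "Cau i y = (\<forall>\<epsilon>>0. \<exists>N. \<forall>p\<ge>N. \<forall>q\<ge>N. \<rho> i (y p) (y q) < \<epsilon>)"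
    for i and y :: "nat \<Rightarrow> 'a"
  define Gp where "Gp y = (\<forall>e>0. \<exists>N. \<forall>p\<ge>N. \<forall>q\<ge>N. g (\<chi> i. \<rho> i (y p) (y q)) < e)"
    for y :: "nat \<Rightarrow> 'a"
  define Ph where "Ph y = (\<exists>L. (\<forall>k. (\<lambda>l. \<phi> (y k) (y l)) \<longlonglongrightarrow> L k) \<and> L \<longlonglongrightarrow> 0)"
    for y :: "nat \<Rightarrow> 'a"
  have good_Cau: "good B0 (Cau i)" for i
  proof -
    have A: "\<exists>r::nat\<Rightarrow>nat. strict_mono r \<and> Cau i (y \<circ> r)" if yB: "\<forall>n. y n \<in> B0" for y
    proof -
      from rho_pc yB obtain r :: "nat \<Rightarrow> nat" where r: "strict_mono r"
        "\<forall>\<epsilon>>0. \<exists>N. \<forall>p\<ge>N. \<forall>q\<ge>N. \<rho> i (y (r p)) (y (r q)) < \<epsilon>"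
        unfolding precompact_pseudometric_on_def by blast
      then have "Cau i (y \<circ> r)" unfolding Cau_def by simp
      with r(1) show ?thesis by blast
    qed
    have B: "Cau i (y \<circ> r)" if Cy: "Cau i y" and sr: "strict_mono r" for y and r :: "nat \<Rightarrow> nat"
      unfolding Cau_def
    proof (intro allI impI)
      fix \<epsilon> :: real assume "\<epsilon> > 0"
      then obtain N where N: "\<forall>p\<ge>N. \<forall>q\<ge>N. \<rho> i (y p) (y q) < \<epsilon>" using Cy unfolding Cau_def by blast
      have "\<forall>p\<ge>N. \<forall>q\<ge>N. \<rho> i ((y \<circ> r) p) ((y \<circ> r) q) < \<epsilon>"
      proof (intro allI impI)
        fix p q assume "p \<ge> N" "q \<ge> N"
        moreover have "p \<le> r p" "q \<le> r q" using seq_suble[OF sr] by auto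
        ultimately show "\<rho> i ((y \<circ> r) p) ((y \<circ> r) q) < \<epsilon>" using N by simp
      qed
      then show "\<exists>N. \<forall>p\<ge>N. \<forall>q\<ge>N. \<rho> i ((y \<circ> r) p) ((y \<circ> r) q) < \<epsilon>" by blast
    qed
    show ?thesis unfolding good_def using A B by blast
  qed
  have GfromC: "Gp z" if zB: "\<forall>k. z k \<in> B0" and zC: "\<forall>i. Cau i z" for z
    unfolding Gp_def
  proof (intro allI impI)
    fix e :: real assume e: "e > 0"
    obtain d where d: "d > 0" "\<forall>x'\<in>{x. \<forall>i. 0 \<le> x $ i}. dist x' 0 < d \<longrightarrow> dist (g x') (g 0) < e"
      using g_cont e unfolding continuous_within_eps_delta by blast
    define c where "c = real CARD('m)"
    have c: "c > 0" unfolding c_def by simp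
    have ev: "eventually (\<lambda>N. \<forall>i. \<forall>p\<ge>N. \<forall>q\<ge>N. \<rho> i (z p) (z q) < d / c) sequentially"
    proof (rule eventually_all_finite)
      fix i
      obtain N0 where "\<forall>p\<ge>N0. \<forall>q\<ge>N0. \<rho> i (z p) (z q) < d / c"
        using zC d(1) c unfolding Cau_def by (meson divide_pos_pos)
      then show "eventually (\<lambda>N. \<forall>p\<ge>N. \<forall>q\<ge>N. \<rho> i (z p) (z q) < d / c) sequentially"
        unfolding eventually_sequentially by (meson order.trans)
    qed
    then obtain N where N: "\<forall>i. \<forall>p\<ge>N. \<forall>q\<ge>N. \<rho> i (z p) (z q) < d / c"
      unfolding eventually_sequentially by blast
    have "\<forall>p\<ge>N. \<forall>q\<ge>N. g (\<chi> i. \<rho> i (z p) (z q)) < e"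
    proof (intro allI impI)
      fix p q assume pq: "p \<ge> N" "q \<ge> N"
      define x where "x = (\<chi> i. \<rho> i (z p) (z q))"
      have xnn: "\<forall>i. 0 \<le> x $ i" unfolding x_def using rho_nn zB by simp
      have "norm x \<le> (\<Sum>i\<in>UNIV. \<bar>x $ i\<bar>)" by (rule norm_le_l1_cart)
      also have "\<dots> < (\<Sum>i\<in>(UNIV::'m set). d / c)"
      proof (rule sum_strict_mono)
        show "finite (UNIV::'m set)" by simp
        show "(UNIV::'m set) \<noteq> {}" by simp
        fix i :: 'm
        show "\<bar>x $ i\<bar> < d / c" using xnn N pq unfolding x_def by simp
      qed
      also have "\<dots> = d" using c by (simp add: c_def)
      finally have "dist x 0 < d" by (simp add: dist_norm)
      then have "dist (g x) (g 0) < e" using d(2) xnn by blast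
      then show "g (\<chi> i. \<rho> i (z p) (z q)) < e" using g_zero unfolding x_def by (simp add: dist_real_def)
    qed
    then show "\<exists>N. \<forall>p\<ge>N. \<forall>q\<ge>N. g (\<chi> i. \<rho> i (z p) (z q)) < e" by blast
  qed
  have good_G: "good B0 Gp"
  proof -
    have gC: "good B0 (\<lambda>y. \<forall>i\<in>UNIV. Cau i y)"
      using good_Cau by (intro good_ball) auto
    have A: "\<exists>r::nat\<Rightarrow>nat. strict_mono r \<and> Gp (y \<circ> r)" if yB: "\<forall>n. y n \<in> B0" for y
    proof -
      obtain r :: "nat \<Rightarrow> nat" where r: "strict_mono r" "\<forall>i\<in>UNIV. Cau i (y \<circ> r)"
        using gC yB unfolding good_def by blast
      have "Gp (y \<circ> r)" using GfromC[of "y \<circ> r"] r(2) yB by simp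
      with r(1) show ?thesis by blast
    qed
    have B: "Gp (y \<circ> r)" if Cy: "Gp y" and sr: "strict_mono r" for y and r :: "nat \<Rightarrow> nat"
      unfolding Gp_def
    proof (intro allI impI)
      fix e :: real assume "e > 0"
      then obtain N where N: "\<forall>p\<ge>N. \<forall>q\<ge>N. g (\<chi> i. \<rho> i (y p) (y q)) < e"
        using Cy unfolding Gp_def by blast
      have "\<forall>p\<ge>N. \<forall>q\<ge>N. g (\<chi> i. \<rho> i ((y \<circ> r) p) ((y \<circ> r) q)) < e"
      proof (intro allI impI)
        fix p q assume "p \<ge> N" "q \<ge> N"
        moreover have "p \<le> r p" "q \<le> r q" using seq_suble[OF sr] by auto
        ultimately show "g (\<chi> i. \<rho> i ((y \<circ> r) p) ((y \<circ> r) q)) < e" using N by simp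
      qed
      then show "\<exists>N. \<forall>p\<ge>N. \<forall>q\<ge>N. g (\<chi> i. \<rho> i ((y \<circ> r) p) ((y \<circ> r) q)) < e" by blast
    qed
    show ?thesis unfolding good_def using A B by blast
  qed
  have good_Ph: "good B0 Ph"
  proof -
    have A: "\<exists>r::nat\<Rightarrow>nat. strict_mono r \<and> Ph (y \<circ> r)" if yB: "\<forall>n. y n \<in> B0" for y
    proof -
      from phi_seq yB obtain r :: "nat \<Rightarrow> nat" and L where r: "strict_mono r"
        "\<forall>k. (\<lambda>l. \<phi> (y (r k)) (y (r l))) \<longlonglongrightarrow> L k" "L \<longlonglongrightarrow> 0"
        by blast
      then have "Ph (y \<circ> r)" unfolding Ph_def by auto
      with r(1) show ?thesis by blast
    qed
    have B: "Ph (y \<circ> r)" if Cy: "Ph y" and sr: "strict_mono r" for y and r :: "nat \<Rightarrow> nat"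
    proof -
      obtain L where L: "\<forall>k. (\<lambda>l. \<phi> (y k) (y l)) \<longlonglongrightarrow> L k" "L \<longlonglongrightarrow> 0"
        using Cy unfolding Ph_def by blast
      have "(\<lambda>l. \<phi> (y (r k)) (y (r l))) \<longlonglongrightarrow> L (r k)" for k
        using LIMSEQ_subseq_LIMSEQ[OF L(1)[rule_format, of "r k"] sr] by (simp add: o_def)
      moreover have "(L \<circ> r) \<longlonglongrightarrow> 0" using LIMSEQ_subseq_LIMSEQ[OF L(2) sr] .
      ultimately show ?thesis unfolding Ph_def by (intro exI[of _ "L \<circ> r"]) simp
    qed
    show ?thesis unfolding good_def using A B by blast
  qed
  have SnB0: "\<forall>x\<in>B0. Sn j x \<in> B0" for j using Sn_B0 by blast
  have good_all: "good B0 (\<lambda>y. \<forall>j\<in>{..<n}. Gp (Sn j \<circ> y) \<and> Ph (Sn j \<circ> y))" for n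
  proof (rule good_ball)
    show "finite {..<n}" by simp
    show "\<forall>j\<in>{..<n}. good B0 (\<lambda>y. Gp (Sn j \<circ> y) \<and> Ph (Sn j \<circ> y))"
      using good_conj[OF good_map[OF SnB0 good_G] good_map[OF SnB0 good_Ph]] by blast
  qed
  have pair: "\<exists>k l. k < l \<and> dist (Sn n (w k)) (Sn n (w l)) < \<eta>^n * \<delta> + \<epsilon>"
    if wB: "\<forall>k. w k \<in> B0" and wd: "\<forall>k l. dist (w k) (w l) < \<delta>"
      and J: "\<forall>j\<in>{..<n}. Gp (Sn j \<circ> w) \<and> Ph (Sn j \<circ> w)"
      and ep: "\<epsilon> > 0" for n w \<delta> \<epsilon>
  proof -
    define e where "e = \<epsilon> / (2 * real n + 2)"
    have e: "e > 0" using ep by (simp add: e_def)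
    have ne: "real n * (2 * e) < \<epsilon>" using ep by (simp add: e_def field_simps)
    have evk: "eventually (\<lambda>k. \<forall>j\<in>{..<n}. (\<forall>q\<ge>k. g (\<chi> i. \<rho> i (Sn j (w k)) (Sn j (w q))) < e) \<and>
        eventually (\<lambda>l. \<phi> (Sn j (w k)) (Sn j (w l)) < e) sequentially) sequentially"
    proof (rule eventually_ball_finite)
      show "finite {..<n}" by simp
      show "\<forall>j\<in>{..<n}. eventually (\<lambda>k. (\<forall>q\<ge>k. g (\<chi> i. \<rho> i (Sn j (w k)) (Sn j (w q))) < e) \<and>
        eventually (\<lambda>l. \<phi> (Sn j (w k)) (Sn j (w l)) < e) sequentially) sequentially"
      proof
        fix j assume j: "j \<in> {..<n}"
        obtain N where N: "\<forall>p\<ge>N. \<forall>q\<ge>N. g (\<chi> i. \<rho> i (Sn j (w p)) (Sn j (w q))) < e"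
          using J j e unfolding Gp_def by fastforce
        obtain L where L: "\<forall>k. (\<lambda>l. \<phi> (Sn j (w k)) (Sn j (w l))) \<longlonglongrightarrow> L k" "L \<longlonglongrightarrow> 0"
          using J j unfolding Ph_def by fastforce
        have ev1: "eventually (\<lambda>k. L k < e) sequentially" using order_tendstoD(2)[OF L(2) e] .
        have ev2: "eventually (\<lambda>k. k \<ge> N) sequentially" by (rule eventually_ge_at_top)
        show "eventually (\<lambda>k. (\<forall>q\<ge>k. g (\<chi> i. \<rho> i (Sn j (w k)) (Sn j (w q))) < e) \<and>
          eventually (\<lambda>l. \<phi> (Sn j (w k)) (Sn j (w l)) < e) sequentially) sequentially"
          using ev1 ev2
        proof (rule eventually_elim2)
          fix k assume k: "L k < e" "k \<ge> N"
          have "\<forall>q\<ge>k. g (\<chi> i. \<rho> i (Sn j (w k)) (Sn j (w q))) < e" using N k(2) by simp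
          moreover have "eventually (\<lambda>l. \<phi> (Sn j (w k)) (Sn j (w l)) < e) sequentially"
            using order_tendstoD(2)[OF L(1)[rule_format, of k] k(1)] .
          ultimately show "(\<forall>q\<ge>k. g (\<chi> i. \<rho> i (Sn j (w k)) (Sn j (w q))) < e) \<and>
            eventually (\<lambda>l. \<phi> (Sn j (w k)) (Sn j (w l)) < e) sequentially" by blast
        qed
      qed
    qed
    then obtain k where k: "\<forall>j\<in>{..<n}. (\<forall>q\<ge>k. g (\<chi> i. \<rho> i (Sn j (w k)) (Sn j (w q))) < e) \<and>
        eventually (\<lambda>l. \<phi> (Sn j (w k)) (Sn j (w l)) < e) sequentially"
      unfolding eventually_sequentially by blast
    have evl: "eventually (\<lambda>l. \<forall>j\<in>{..<n}. \<phi> (Sn j (w k)) (Sn j (w l)) < e) sequentially"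
      using k by (intro eventually_ball_finite) auto
    have "eventually (\<lambda>l. (\<forall>j\<in>{..<n}. \<phi> (Sn j (w k)) (Sn j (w l)) < e) \<and> l > k) sequentially"
      using evl eventually_gt_at_top[of k] by (rule eventually_conj)
    then obtain l where l: "\<forall>j\<in>{..<n}. \<phi> (Sn j (w k)) (Sn j (w l)) < e" "l > k"
      unfolding eventually_sequentially by blast
    have hb: "h j (w k) (w l) \<le> 2 * e" if "j \<in> {..<n}" for j
    proof -
      have "g (\<chi> i. \<rho> i (Sn j (w k)) (Sn j (w l))) < e" using k that l(2) by simp
      moreover have "\<phi> (Sn j (w k)) (Sn j (w l)) < e" using l(1) that by blast
      ultimately show ?thesis unfolding h_def by simp
    qed
    have "(\<Sum>j<n. h j (w k) (w l)) \<le> of_nat (card {..<n}) * (2 * e)"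
      by (rule sum_bounded_above) (use hb in blast)
    then have sb: "(\<Sum>j<n. h j (w k) (w l)) \<le> real n * (2 * e)" by simp
    have "\<eta>^n * dist (w k) (w l) \<le> \<eta>^n * \<delta>"
      using wd eta by (intro mult_left_mono) (auto intro: less_imp_le)
    then have "dist (Sn n (w k)) (Sn n (w l)) < \<eta>^n * \<delta> + \<epsilon>"
      using iter[OF wB[rule_format] wB[rule_format], of n k l] sb ne by linarith
    with l(2) show ?thesis by blast
  qed
  have seqprop: "\<exists>k l. k < l \<and> dist (Sn n (y k)) (Sn n (y l)) \<le> \<eta>^n * \<delta> + \<epsilon>"
    if F: "finite F" "\<forall>U\<in>F. bounded U \<and> diameter U < \<delta>" and yF: "\<forall>k. y k \<in> B0 \<and> y k \<in> \<Union>F"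
      and ep: "\<epsilon> > 0"
    for n F \<delta> \<epsilon> and y :: "nat \<Rightarrow> 'a"
  proof -
    have "\<forall>k. \<exists>U. U \<in> F \<and> y k \<in> U" using yF by blast
    then obtain Uf where Uf: "\<forall>k. Uf k \<in> F \<and> y k \<in> Uf k" by metis
    have "finite (Uf ` UNIV)" using Uf F(1) by (metis finite_subset image_subsetI)
    then obtain a0 where "infinite {a \<in> (UNIV::nat set). Uf a = Uf a0}"
      using pigeonhole_infinite[of "UNIV::nat set" Uf] by auto
    then obtain r :: "nat \<Rightarrow> nat" where r: "strict_mono r" "\<forall>m. r m \<in> {a \<in> UNIV. Uf a = Uf a0}"
      using infinite_enumerate by blast
    define U0 where "U0 = Uf a0"
    have U0: "bounded U0" "diameter U0 < \<delta>" using F(2) Uf unfolding U0_def by auto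
    have yrU: "\<forall>m. y (r m) \<in> U0" using r(2) Uf unfolding U0_def by (metis (mono_tags, lifting) mem_Collect_eq)
    have "\<forall>m. (y \<circ> r) m \<in> B0" using yF by simp
    then obtain r' :: "nat \<Rightarrow> nat" where r': "strict_mono r'"
      "\<forall>j\<in>{..<n}. Gp (Sn j \<circ> (y \<circ> r \<circ> r')) \<and> Ph (Sn j \<circ> (y \<circ> r \<circ> r'))"
      using good_all[of n] unfolding good_def by blast
    define w where "w = y \<circ> r \<circ> r'"
    have wB: "\<forall>k. w k \<in> B0" using yF unfolding w_def by simp
    have wd: "\<forall>k l. dist (w k) (w l) < \<delta>"
    proof (intro allI)
      fix k l
      have "dist (w k) (w l) \<le> diameter U0"
        using diameter_bounded_bound[OF U0(1)] yrU unfolding w_def by simp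
      then show "dist (w k) (w l) < \<delta>" using U0(2) by linarith
    qed
    obtain k l where kl: "k < l" "dist (Sn n (w k)) (Sn n (w l)) < \<eta>^n * \<delta> + \<epsilon>"
      using pair[OF wB wd r'(2)[folded w_def] ep] by blast
    have "(r \<circ> r') k < (r \<circ> r') l" using strict_mono_o[OF r(1) r'(1)] kl(1) by (rule strict_monoD)
    moreover have "dist (Sn n (y ((r \<circ> r') k))) (Sn n (y ((r \<circ> r') l))) \<le> \<eta>^n * \<delta> + \<epsilon>"
      using kl(2) unfolding w_def by simp
    ultimately show ?thesis by blast
  qed
  have aB0: "0 \<le> kuratowski_alpha B0" using alpha_nonneg[OF bdd] .
  have core: "\<exists>F. finite F \<and> Sn n ` B0 \<subseteq> \<Union>F \<and>
      (\<forall>U\<in>F. bounded U \<and> diameter U < 2 * \<eta>^n * kuratowski_alpha B0 + e)"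
    if "e > 0" for n e
    proof -
    define \<delta> where "\<delta> = kuratowski_alpha B0 + e / 4"
    obtain F where F: "finite F" "B0 \<subseteq> \<Union>F" "\<forall>U\<in>F. bounded U \<and> diameter U < \<delta>"
      using alpha_cover[OF bdd, of \<delta>] \<open>e > 0\<close> unfolding \<delta>_def by auto
    define r where "r = \<eta>^n * \<delta> + e / 8"
    have sep: "\<exists>k l. k < l \<and> dist (x k) (x l) \<le> r" if xS: "\<forall>m. x m \<in> Sn n ` B0" for x :: "nat \<Rightarrow> 'a"
    proof -
      have "\<forall>m. \<exists>y. y \<in> B0 \<and> x m = Sn n y" using xS by blast
      then obtain y where y: "\<forall>m. y m \<in> B0 \<and> x m = Sn n (y m)" by metis
      have "\<forall>k. y k \<in> B0 \<and> y k \<in> \<Union>F" using y F(2) by blast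
      moreover have "e / 8 > 0" using \<open>e > 0\<close> by simp
      ultimately obtain k l where "k < l" "dist (Sn n (y k)) (Sn n (y l)) \<le> \<eta>^n * \<delta> + e / 8"
        using seqprop[OF F(1) F(3)] by blast
      then show ?thesis using y unfolding r_def by metis
    qed
    obtain P where P: "finite P" "P \<subseteq> Sn n ` B0" "Sn n ` B0 \<subseteq> (\<Union>p\<in>P. cball p r)"
      using cover_of_sep[of "Sn n ` B0" r] sep by blast
    have rpos: "r > 0"
    proof -
      have "\<delta> > 0" using aB0 \<open>e > 0\<close> unfolding \<delta>_def by simp
      then have "\<eta>^n * \<delta> \<ge> 0" using eta by simp
      then show ?thesis using \<open>e > 0\<close> unfolding r_def by simp
    qed
    have en: "\<eta>^n \<le> 1" using eta by (simp add: power_le_one)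
    have "\<eta>^n * (e / 2) \<le> 1 * (e / 2)" using en \<open>e > 0\<close> by (intro mult_right_mono) auto
    moreover have "2 * r = 2 * \<eta>^n * kuratowski_alpha B0 + \<eta>^n * (e / 2) + e / 4"
      unfolding r_def \<delta>_def by (simp add: distrib_left distrib_right)
    ultimately have "2 * r \<le> 2 * \<eta>^n * kuratowski_alpha B0 + e / 2 + e / 4" by linarith
    also have "\<dots> < 2 * \<eta>^n * kuratowski_alpha B0 + e" using \<open>e > 0\<close> by simp
    finally have r2: "2 * r < 2 * \<eta>^n * kuratowski_alpha B0 + e" .
    have "finite ((\<lambda>p. cball p r) ` P)" using P(1) by simp
    moreover have "Sn n ` B0 \<subseteq> \<Union>((\<lambda>p. cball p r) ` P)" using P(3) by simp
    moreover have "\<forall>U\<in>(\<lambda>p. cball p r) ` P. bounded U \<and> diameter U < 2 * \<eta>^n * kuratowski_alpha B0 + e"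
    proof
      fix U assume "U \<in> (\<lambda>p. cball p r) ` P"
      then obtain p where "U = cball p r" by blast
      moreover have "diameter (cball p r) \<le> 2 * r" using rpos by (intro diameter_cball_le) simp
      ultimately show "bounded U \<and> diameter U < 2 * \<eta>^n * kuratowski_alpha B0 + e" using r2 by simp
    qed
    ultimately show ?thesis by blast
  qed
  have part2: "\<forall>B ts. bounded B \<and> 0 \<le> ts \<and> (\<forall>t\<ge>ts. S t ` B \<subseteq> B0) \<longrightarrow>
       (\<forall>t\<ge>ts + T. kuratowski_alpha (S t ` B)
           \<le> 2 * \<eta> powr ((t - ts - T) / T) * kuratowski_alpha B0)"
    proof (intro allI impI)
    fix B ts t
    assume H: "bounded B \<and> 0 \<le> ts \<and> (\<forall>t\<ge>ts. S t ` B \<subseteq> B0)" and t: "t \<ge> ts + T"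
    define x where "x = (t - ts) / T"
    define n where "n = nat \<lfloor>x\<rfloor>"
    have q1: "x \<ge> 1" using t T_pos by (simp add: x_def field_simps)
    have fl: "real_of_int \<lfloor>x\<rfloor> = real n" using q1 by (simp add: n_def)
    have nle: "real n \<le> x" using fl of_int_floor_le[of x] by linarith
    have nlt: "x < real n + 1" using fl real_of_int_floor_add_one_gt[of x] by linarith
    have n1: "n \<ge> 1" using q1 nlt by linarith
    define s where "s = t - real n * T"
    have "real n * T \<le> t - ts" using nle T_pos by (simp add: x_def field_simps)
    then have s_ge: "s \<ge> ts" by (simp add: s_def)
    have s0: "s \<ge> 0" using s_ge H by linarith
    have St: "S t y = Sn n (S s y)" for y
    proof -
      have "S t y = S (real n * T + s) y" by (simp add: s_def)
      also have "\<dots> = S (real n * T) (S s y)" using T_pos s0 by (intro S_add) auto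
      finally show ?thesis unfolding Sn_def .
    qed
    have sub: "S t ` B \<subseteq> Sn n ` B0"
    proof
      fix z assume "z \<in> S t ` B"
      then obtain y where y: "y \<in> B" "z = S t y" by blast
      have "S s ` B \<subseteq> B0" using H s_ge by blast
      then have "S s y \<in> B0" using y(1) by blast
      moreover have "z = Sn n (S s y)" using y(2) St[of y] by simp
      ultimately show "z \<in> Sn n ` B0" by (rule rev_image_eqI)
    qed
    have le1: "kuratowski_alpha (S t ` B) \<le> 2 * \<eta>^n * kuratowski_alpha B0"
    proof (rule alpha_le)
      show "0 \<le> 2 * \<eta> ^ n * kuratowski_alpha B0" using eta aB0 by simp
    next
      fix e :: real assume "e > 0"
      then obtain F where F: "finite F" "Sn n ` B0 \<subseteq> \<Union>F"
        "\<forall>U\<in>F. bounded U \<and> diameter U < 2 * \<eta>^n * kuratowski_alpha B0 + e"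
        using core[of e n] by blast
      have "S t ` B \<subseteq> \<Union>F" using sub F(2) by (rule subset_trans)
      with F(1) F(3) show "\<exists>F. finite F \<and> S t ` B \<subseteq> \<Union>F \<and>
          (\<forall>U\<in>F. bounded U \<and> diameter U < 2 * \<eta>^n * kuratowski_alpha B0 + e)"
        by (intro exI[of _ F]) simp
    qed
    have le2: "\<eta>^n \<le> \<eta> powr ((t - ts - T) / T)"
    proof (cases "\<eta> = 0")
      case True then show ?thesis using n1 by (simp add: power_0_left)
    next
      case False
      then have ep: "\<eta> > 0" using eta by simp
      have "(t - ts - T) / T = x - 1" using T_pos by (simp add: x_def field_simps)
      then have "(t - ts - T) / T \<le> real n" using nlt by simp
      then have "\<eta> powr real n \<le> \<eta> powr ((t - ts - T) / T)"
        using powr_mono'[of "(t - ts - T) / T" "real n" \<eta>] eta by simp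
      then show ?thesis using powr_realpow[OF ep] by simp
    qed
    have "2 * \<eta>^n * kuratowski_alpha B0 \<le> 2 * \<eta> powr ((t - ts - T) / T) * kuratowski_alpha B0"
      using le2 aB0 by (simp add: mult_right_mono)
    with le1 show "kuratowski_alpha (S t ` B) \<le> 2 * \<eta> powr ((t - ts - T) / T) * kuratowski_alpha B0"
      by linarith
  qed
  have part1: "exponentially_decaying S"
    proof -
    have ex: "kuratowski_alpha (S t ` B0) \<le> 2 * \<eta> powr ((t - T) / T) * kuratowski_alpha B0"
      if "t \<ge> T" for t
    proof -
      have "\<forall>t\<ge>0. S t ` B0 \<subseteq> B0" using inv unfolding positively_invariant_def by blast
      then have H0: "bounded B0 \<and> 0 \<le> (0::real) \<and> (\<forall>t\<ge>0. S t ` B0 \<subseteq> B0)" using bdd by simp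
      have "t \<ge> 0 + T" using that by simp
      from part2[rule_format, OF H0 this] show ?thesis by simp
    qed
    have "\<exists>t0 C \<beta>. t0 > 0 \<and> C > 0 \<and> \<beta> > 0 \<and>
           (\<forall>t\<ge>t0. kuratowski_alpha (S t ` B0) \<le> C * exp (- \<beta> * t))"
    proof (cases "\<eta> = 0")
      case True
      have "\<forall>t\<ge>T. kuratowski_alpha (S t ` B0) \<le> 1 * exp (- 1 * t)"
      proof (intro allI impI)
        fix t assume "t \<ge> T"
        then have "kuratowski_alpha (S t ` B0) \<le> 0" using ex True by simp
        also have "0 \<le> 1 * exp (- 1 * t)" by simp
        finally show "kuratowski_alpha (S t ` B0) \<le> 1 * exp (- 1 * t)" .
      qed
      then show ?thesis using T_pos by (intro exI[of _ T] exI[of _ 1]) auto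
    next
      case False
      then have ep: "\<eta> > 0" using eta by simp
      define \<beta> where "\<beta> = - ln \<eta> / T"
      define C where "C = 2 * kuratowski_alpha B0 / \<eta> + 1"
      have lneg: "ln \<eta> < 0" using ep eta by simp
      have bp: "\<beta> > 0" using divide_neg_pos[OF lneg T_pos] by (simp add: \<beta>_def)
      have Cp: "C > 0" using aB0 ep by (simp add: C_def add_nonneg_pos)
      have "kuratowski_alpha (S t ` B0) \<le> C * exp (- \<beta> * t)" if "t \<ge> T" for t
      proof -
        have "\<eta> powr ((t - T) / T) = exp (ln \<eta> * ((t - T) / T))"
          using ep by (simp add: powr_def)
        also have "ln \<eta> * ((t - T) / T) = - ln \<eta> + (- \<beta> * t)"
          using T_pos by (simp add: \<beta>_def field_simps)
        also have "exp (- ln \<eta> + (- \<beta> * t)) = exp (- \<beta> * t) / \<eta>"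
        proof -
          have "exp (- ln \<eta>) = inverse \<eta>" using ep by (simp add: exp_minus)
          moreover have "exp (- ln \<eta> + (- \<beta> * t)) = exp (- ln \<eta>) * exp (- \<beta> * t)"
            by (rule exp_add)
          ultimately show ?thesis by (simp add: divide_inverse mult.commute)
        qed
        finally have pe: "\<eta> powr ((t - T) / T) = exp (- \<beta> * t) / \<eta>" .
        have "kuratowski_alpha (S t ` B0) \<le> 2 * (exp (- \<beta> * t) / \<eta>) * kuratowski_alpha B0"
          using ex[OF that] pe by simp
        also have "\<dots> = (2 * kuratowski_alpha B0 / \<eta>) * exp (- \<beta> * t)" by simp
        also have "\<dots> \<le> C * exp (- \<beta> * t)"
          by (rule mult_right_mono) (simp_all add: C_def)
        finally show ?thesis .
      qed
      then show ?thesis using T_pos bp Cp by blast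
    qed
    then show ?thesis unfolding exponentially_decaying_def using diss inv bdd abs by blast
  qed
  show ?thesis using part1 part2 by blast
qed

end
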